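(* Let $G$ be a finite non-abelian group satisfying condition (Con). Then the algebraic connectivity of $\mathcal C_G$ (the second smallest eigenvalue, counted with multiplicity, of its Laplacian matrix) equals $|Z(G)|$.
   Context: For a finite group $G$, the commuting graph $\mathcal C_G$ is the simple undirected graph with vertex set $G$ in which distinct $u,v\in G$ are adjacent iff $uv=vu$. The Laplacian matrix of a simple graph is $L=D-A$ ($A$ adjacency matrix, $D$ diagonal degree matrix). $Z(G)$ is the center of $G$ and $C(v)=\{w\in G: wv=vw\}$ the centralizer of $v$. Condition (Con): for all $u,v\in G\setminus Z(G)$, either $C(u)=C(v)$ or $C(u)\cap C(v)=Z(G)$. *)

theory Defs
  imports "HOL-Algebra.Group" "Jordan_Normal_Form.Char_Poly"
begin

definition grp_center :: "('a, 'b) monoid_scheme \<Rightarrow> 'a set" where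
  "grp_center G = {z \<in> carrier G. \<forall>w \<in> carrier G. z \<otimes>\<^bsub>G\<^esub> w = w \<otimes>\<^bsub>G\<^esub> z}"

definition grp_centralizer :: "('a, 'b) monoid_scheme \<Rightarrow> 'a \<Rightarrow> 'a set" where
  "grp_centralizer G v = {w \<in> carrier G. w \<otimes>\<^bsub>G\<^esub> v = v \<otimes>\<^bsub>G\<^esub> w}"

definition con_condition :: "('a, 'b) monoid_scheme \<Rightarrow> bool" where
  "con_condition G \<longleftrightarrow>
     (\<forall>u \<in> carrier G - grp_center G. \<forall>v \<in> carrier G - grp_center G.
        grp_centralizer G u = grp_centralizer G v \<or>
        grp_centralizer G u \<inter> grp_centralizer G v = grp_center G)"

definition comm_adj :: "('a, 'b) monoid_scheme \<Rightarrow> 'a \<Rightarrow> 'a \<Rightarrow> bool" where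
  "comm_adj G u v \<longleftrightarrow> u \<in> carrier G \<and> v \<in> carrier G \<and> u \<noteq> v \<and>
     u \<otimes>\<^bsub>G\<^esub> v = v \<otimes>\<^bsub>G\<^esub> u"

(* Laplacian L = D - A of the commuting graph, with vertices ordered by an
   enumeration f : {0..<|G|} -> carrier G *)
definition comm_laplacian :: "('a, 'b) monoid_scheme \<Rightarrow> (nat \<Rightarrow> 'a) \<Rightarrow> real mat" where
  "comm_laplacian G f = mat (card (carrier G)) (card (carrier G))
     (\<lambda>(i, j). (if i = j then real (card {w. comm_adj G (f i) w}) else 0)
              - (if comm_adj G (f i) (f j) then 1 else 0))"

definition eigenvalues_sorted :: "real mat \<Rightarrow> real list" where
  "eigenvalues_sorted A = sorted_list_of_multiset (proots (char_poly A))"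

definition algebraic_connectivity :: "real mat \<Rightarrow> real" where
  "algebraic_connectivity A = eigenvalues_sorted A ! 1"

end

theory Submission
  imports Defs
begin


lemma sum_Suc_delta:
  fixes i m :: nat and c :: real
  assumes "i < Suc m"
  shows "(\<Sum>k\<in>{0..<m}. (if i = Suc k then c else 0)) = (if i = 0 then 0 else c)"
proof (cases i)
  case (Suc i')
  have "(\<Sum>k\<in>{0..<m}. (if i = Suc k then c else 0)) = (\<Sum>k\<in>{0..<m}. (if k = i' then c else 0))"
    using Suc by (intro sum.cong) auto
  also have "\<dots> = c" using Suc assms by (simp add: sum.delta)
  finally show ?thesis using Suc by simp
qed simp

lemma sum_PQ:
  fixes i j m :: nat
  assumes ij: "i < Suc m" "j < Suc m"
  shows "(\<Sum>k\<in>{0..<Suc m}. (if k = 0 then 1 else if i = k then 1 else 0) * (if k = j then 1 else if j = 0 then -1 else (0::real)))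
    = (if i = j then 1 else 0)"
proof (cases "j = 0")
  case True
  have "(\<Sum>k\<in>{0..<Suc m}. (if k = 0 then 1 else if i = k then 1 else 0) * (if k = j then 1 else if j = 0 then -1 else (0::real)))
     = 1 + (\<Sum>k\<in>{0..<m}. (if i = Suc k then -1 else 0))"
  proof -
    have tail: "(\<Sum>k = 0..<m. (if Suc k = 0 then 1 else if i = Suc k then 1 else 0) *
          (if Suc k = j then 1 else if j = 0 then -1 else (0::real))) = (\<Sum>k\<in>{0..<m}. (if i = Suc k then -1 else 0))"
      by (rule sum.cong[OF refl]) (use True in auto)
    show ?thesis unfolding sum.atLeast0_lessThan_Suc_shift using True
      by (simp, (intro impI sum.cong[OF refl])?, auto)
  qed
  also have "\<dots> = (if i = j then 1 else 0)" using sum_Suc_delta[OF ij(1), of "-1"] True by simp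
  finally show ?thesis .
next
  case False
  have "(\<Sum>k\<in>{0..<Suc m}. (if k = 0 then 1 else if i = k then 1 else 0) * (if k = j then 1 else if j = 0 then -1 else (0::real)))
     = (\<Sum>k\<in>{0..<Suc m}. if k = j then (if i = j then 1 else 0) else 0)"
    using False by (intro sum.cong) auto
  also have "\<dots> = (if i = j then 1 else 0)" using ij by (subst sum.delta) auto
  finally show ?thesis .
qed

lemma sum_QP:
  fixes i j m :: nat
  assumes ij: "i < Suc m" "j < Suc m"
  shows "(\<Sum>k\<in>{0..<Suc m}. (if i = k then 1 else if k = 0 then -1 else 0) * (if j = 0 then 1 else if k = j then 1 else (0::real)))
    = (if i = j then 1 else 0)"
proof (cases "j = 0")
  case True
  have "(\<Sum>k\<in>{0..<Suc m}. (if i = k then 1 else if k = 0 then -1 else 0) * (if j = 0 then 1 else if k = j then 1 else (0::real)))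
     = (if i = 0 then 1 else -1) + (\<Sum>k\<in>{0..<m}. (if i = Suc k then 1 else 0))"
  proof -
    have tail: "(\<Sum>k = 0..<m. (if i = Suc k then 1 else if Suc k = 0 then -1 else 0) *
          (if j = 0 then 1 else if Suc k = j then 1 else (0::real))) = (\<Sum>k\<in>{0..<m}. (if i = Suc k then 1 else 0))"
      by (rule sum.cong[OF refl]) (use True in auto)
    show ?thesis unfolding sum.atLeast0_lessThan_Suc_shift using True
      by (simp, (intro impI sum.cong[OF refl])?, auto)
  qed
  also have "\<dots> = (if i = j then 1 else 0)" using sum_Suc_delta[OF ij(1), of 1] True by simp
  finally show ?thesis .
next
  case False
  have "(\<Sum>k\<in>{0..<Suc m}. (if i = k then 1 else if k = 0 then -1 else 0) * (if j = 0 then 1 else if k = j then 1 else (0::real)))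
     = (\<Sum>k\<in>{0..<Suc m}. if k = j then (if i = j then 1 else 0) else 0)"
    using False by (intro sum.cong) auto
  also have "\<dots> = (if i = j then 1 else 0)" using ij by (subst sum.delta) auto
  finally show ?thesis .
qed


definition Lop :: "('a, 'b) monoid_scheme \<Rightarrow> ('a \<Rightarrow> real) \<Rightarrow> 'a \<Rightarrow> real" where
  "Lop G v x = real (card (grp_centralizer G x)) * v x - (\<Sum>y\<in>grp_centralizer G x. v y)"

context
  fixes G :: "('a, 'b) monoid_scheme"
  assumes grp: "group G" and fin: "finite (carrier G)"
begin

interpretation group G by (rule grp)

lemma cent_sub: "grp_centralizer G x \<subseteq> carrier G"
  unfolding grp_centralizer_def by auto

lemma center_sub: "grp_center G \<subseteq> carrier G"
  unfolding grp_center_def by auto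

lemma fin_cent: "finite (grp_centralizer G x)"
  using cent_sub fin finite_subset by blast

lemma fin_center: "finite (grp_center G)"
  using center_sub fin finite_subset by blast

lemma center_in_cent: "x \<in> carrier G \<Longrightarrow> grp_center G \<subseteq> grp_centralizer G x"
  unfolding grp_center_def grp_centralizer_def by auto

lemma self_in_cent: "x \<in> carrier G \<Longrightarrow> x \<in> grp_centralizer G x"
  unfolding grp_centralizer_def by auto

lemma cent_sym: "x \<in> carrier G \<Longrightarrow> y \<in> grp_centralizer G x \<Longrightarrow> x \<in> grp_centralizer G y"
  unfolding grp_centralizer_def by auto

lemma cent_center: "x \<in> grp_center G \<Longrightarrow> grp_centralizer G x = carrier G"
  unfolding grp_center_def grp_centralizer_def by auto

lemma one_center: "\<one>\<^bsub>G\<^esub> \<in> grp_center G"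
  unfolding grp_center_def by auto

lemma card_center_pos: "card (grp_center G) \<ge> 1"
  using one_center fin_center by (metis One_nat_def Suc_leI card_gt_0_iff empty_iff)

lemma card_center_le: "card (grp_center G) \<le> card (carrier G)"
  by (rule card_mono[OF fin center_sub])

lemma card_cent_ge: "x \<in> carrier G \<Longrightarrow> card (grp_center G) \<le> card (grp_centralizer G x)"
  by (rule card_mono[OF fin_cent center_in_cent])

lemma card_cent_diff: "x \<in> carrier G \<Longrightarrow> card (grp_centralizer G x - grp_center G) = card (grp_centralizer G x) - card (grp_center G)"
  using center_in_cent fin_center by (simp add: card_Diff_subset)

lemma sum_Lop: "(\<Sum>x\<in>carrier G. Lop G v x) = 0"
proof -
  have e: "(\<Sum>y\<in>grp_centralizer G x. v y) = (\<Sum>y\<in>carrier G. if y \<in> grp_centralizer G x then v y else 0)" for x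
  proof -
    have "grp_centralizer G x = carrier G \<inter> grp_centralizer G x" using cent_sub by auto
    then show ?thesis using sum.inter_restrict[OF fin] by metis
  qed
  have sw: "(\<Sum>x\<in>carrier G. \<Sum>y\<in>carrier G. if y \<in> grp_centralizer G x then v y else 0)
     = (\<Sum>y\<in>carrier G. \<Sum>x\<in>carrier G. if y \<in> grp_centralizer G x then v y else 0)"
    by (rule sum.swap)
  have inner: "(\<Sum>x\<in>carrier G. if y \<in> grp_centralizer G x then v y else 0) = real (card (grp_centralizer G y)) * v y"
    if "y \<in> carrier G" for y
  proof -
    have "(\<Sum>x\<in>carrier G. if y \<in> grp_centralizer G x then v y else 0) = (\<Sum>x\<in>carrier G. if x \<in> grp_centralizer G y then v y else 0)"
      using that by (intro sum.cong, auto simp: grp_centralizer_def)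
    also have "\<dots> = (\<Sum>x\<in>carrier G \<inter> grp_centralizer G y. v y)"
      using sum.inter_restrict[OF fin, of "\<lambda>_. v y" "grp_centralizer G y"] by simp
    also have "carrier G \<inter> grp_centralizer G y = grp_centralizer G y" using cent_sub by auto
    finally show ?thesis by simp
  qed
  have "(\<Sum>x\<in>carrier G. Lop G v x) = (\<Sum>x\<in>carrier G. real (card (grp_centralizer G x)) * v x)
      - (\<Sum>x\<in>carrier G. \<Sum>y\<in>grp_centralizer G x. v y)"
    unfolding Lop_def by (simp add: sum_subtractf)
  also have "(\<Sum>x\<in>carrier G. \<Sum>y\<in>grp_centralizer G x. v y) = (\<Sum>x\<in>carrier G. real (card (grp_centralizer G x)) * v x)"
    unfolding e sw by (rule sum.cong, auto simp: inner)
  finally show ?thesis by simp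
qed

lemma Lop_cong: "x \<in> carrier G \<Longrightarrow> (\<And>y. y \<in> carrier G \<Longrightarrow> v y = w y) \<Longrightarrow> Lop G v x = Lop G w x"
  unfolding Lop_def using cent_sub self_in_cent by (auto intro!: sum.cong)

context
  assumes con: "con_condition G"
begin

lemma key: "x \<in> carrier G - grp_center G \<Longrightarrow> y \<in> grp_centralizer G x - grp_center G
   \<Longrightarrow> grp_centralizer G y = grp_centralizer G x"
proof -
  assume x: "x \<in> carrier G - grp_center G" and y: "y \<in> grp_centralizer G x - grp_center G"
  have yc: "y \<in> carrier G" using y cent_sub by auto
  from con[unfolded con_condition_def] x y yc
  have "grp_centralizer G x = grp_centralizer G y \<or>
        grp_centralizer G x \<inter> grp_centralizer G y = grp_center G" by auto
  moreover have "y \<in> grp_centralizer G x \<inter> grp_centralizer G y" using y yc self_in_cent by auto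
  ultimately show ?thesis using y by auto
qed

lemma eig_small:
  assumes ev: "\<And>x. x \<in> carrier G \<Longrightarrow> Lop G v x = lam * v x"
    and lz: "lam < real (card (grp_center G))" and l0: "lam \<noteq> 0"
    and x: "x \<in> carrier G"
  shows "v x = 0"
proof -
  define s where "s = (\<Sum>y\<in>carrier G. v y)"
  have "lam * s = 0" using sum_Lop[of v] ev unfolding s_def by (simp add: sum_distrib_left)
  hence s0: "s = 0" using l0 by simp
  have nl: "real (card (carrier G)) > lam" using lz card_center_le by linarith
  have cz: "v y = 0" if y: "y \<in> grp_center G" for y
  proof -
    have yc: "y \<in> carrier G" using y center_sub by auto
    have "Lop G v y = real (card (carrier G)) * v y" using cent_center[OF y] s0 unfolding Lop_def s_def by simp
    with ev[OF yc] have "(real (card (carrier G)) - lam) * v y = 0" by (simp add: algebra_simps)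
    thus ?thesis using nl by simp
  qed
  show ?thesis
  proof (cases "x \<in> grp_center G")
    case True thus ?thesis by (rule cz)
  next
    case False
    define C where "C = grp_centralizer G x"
    define c where "c = real (card C)"
    define T where "T = (\<Sum>y\<in>C. v y)"
    have cge: "c \<ge> real (card (grp_center G))" unfolding c_def C_def using card_cent_ge x by simp
    have cl: "c - lam > 0" using cge lz by simp
    have vy: "v y = T / (c - lam)" if y: "y \<in> C - grp_center G" for y
    proof -
      have yc: "y \<in> carrier G" using y cent_sub C_def by auto
      have Cy: "grp_centralizer G y = C" using key[of x y] x False y C_def by auto
      have "Lop G v y = c * v y - T" unfolding Lop_def Cy c_def T_def by simp
      with ev[OF yc] have "(c - lam) * v y = T" by (simp add: algebra_simps)
      thus ?thesis using cl by (simp add: field_simps)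
    qed
    have "T = (\<Sum>y\<in>C - grp_center G. v y) + (\<Sum>y\<in>grp_center G. v y)"
      unfolding T_def C_def using center_in_cent[OF x] fin_cent
      by (metis add.commute sum.subset_diff)
    also have "(\<Sum>y\<in>grp_center G. v y) = 0" using cz by simp
    also have "(\<Sum>y\<in>C - grp_center G. v y) = real (card (C - grp_center G)) * (T / (c - lam))"
      using vy by simp
    also have "real (card (C - grp_center G)) = c - real (card (grp_center G))"
      unfolding c_def C_def card_cent_diff[OF x] using card_cent_ge[OF x] by (simp add: of_nat_diff)
    finally have "T = (c - real (card (grp_center G))) * (T / (c - lam))" by simp
    hence "T * (c - lam) = (c - real (card (grp_center G))) * T" using cl by (simp add: field_simps)
    hence "T * (real (card (grp_center G)) - lam) = 0" by (simp add: algebra_simps)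
    hence T0: "T = 0" using lz by simp
    have "x \<in> C - grp_center G" using False x self_in_cent C_def by auto
    from vy[OF this] T0 show ?thesis by simp
  qed
qed

lemma eig_zero:
  assumes ev: "\<And>x. x \<in> carrier G \<Longrightarrow> Lop G v x = 0"
    and x: "x \<in> carrier G"
  shows "v x = (\<Sum>y\<in>carrier G. v y) / real (card (carrier G))"
proof -
  define s where "s = (\<Sum>y\<in>carrier G. v y)"
  define n where "n = real (card (carrier G))"
  define z where "z = real (card (grp_center G))"
  have z1: "z \<ge> 1" unfolding z_def using card_center_pos by simp
  have nz: "n \<ge> z" unfolding n_def z_def using card_center_le by simp
  have cz: "v y = s / n" if y: "y \<in> grp_center G" for y
  proof -
    have yc: "y \<in> carrier G" using y center_sub by auto
    have "Lop G v y = n * v y - s" using cent_center[OF y] unfolding Lop_def s_def n_def by simp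
    with ev[OF yc] have "n * v y = s" by simp
    thus ?thesis using nz z1 by (simp add: field_simps)
  qed
  show ?thesis
  proof (cases "x \<in> grp_center G")
    case True thus ?thesis using cz s_def n_def by simp
  next
    case False
    define C where "C = grp_centralizer G x"
    define c where "c = real (card C)"
    define T where "T = (\<Sum>y\<in>C. v y)"
    have cge: "c \<ge> z" unfolding c_def C_def z_def using card_cent_ge x by simp
    have vy: "v y = T / c" if y: "y \<in> C - grp_center G" for y
    proof -
      have yc: "y \<in> carrier G" using y cent_sub C_def by auto
      have Cy: "grp_centralizer G y = C" using key[of x y] x False y C_def by auto
      have "Lop G v y = c * v y - T" unfolding Lop_def Cy c_def T_def by simp
      with ev[OF yc] have "c * v y = T" by (simp add: algebra_simps)
      thus ?thesis using cge z1 by (simp add: field_simps)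
    qed
    have "T = (\<Sum>y\<in>C - grp_center G. v y) + (\<Sum>y\<in>grp_center G. v y)"
      unfolding T_def C_def using center_in_cent[OF x] fin_cent
      by (metis add.commute sum.subset_diff)
    also have "(\<Sum>y\<in>grp_center G. v y) = z * (s / n)" using cz z_def by simp
    also have "(\<Sum>y\<in>C - grp_center G. v y) = real (card (C - grp_center G)) * (T / c)"
      using vy by simp
    also have "real (card (C - grp_center G)) = c - z"
      unfolding c_def C_def z_def card_cent_diff[OF x] using card_cent_ge[OF x] by (simp add: of_nat_diff)
    finally have "T = (c - z) * (T / c) + z * (s / n)" by simp
    hence "T * c = (c - z) * T + z * (s / n) * c" using cge z1 by (simp add: field_simps)
    hence "z * (T - (s / n) * c) = 0" by (simp add: algebra_simps)
    hence T0: "T = (s / n) * c" using z1 by simp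
    have "x \<in> C - grp_center G" using False x self_in_cent C_def by auto
    from vy[OF this] T0 cge z1 show ?thesis unfolding s_def n_def by simp
  qed
qed

end
end


definition indK :: "('a, 'b) monoid_scheme \<Rightarrow> 'a \<Rightarrow> 'a \<Rightarrow> real" where
  "indK G a x = (if x \<in> grp_centralizer G a - grp_center G then 1 else 0)"

lemma Lop_lin: "Lop G (\<lambda>x. \<alpha> * p x + \<beta> * q x) y = \<alpha> * Lop G p y + \<beta> * Lop G q y"
  unfolding Lop_def by (simp add: sum.distrib sum_distrib_left algebra_simps)

context
  fixes G :: "('a, 'b) monoid_scheme"
  assumes grp: "group G" and fin: "finite (carrier G)" and con: "con_condition G"
begin

lemma Lop_ind:
  assumes a: "a \<in> carrier G - grp_center G" and x: "x \<in> carrier G"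
  shows "Lop G (indK G a) x = real (card (grp_center G)) * indK G a x
     - real (card (grp_centralizer G a - grp_center G)) * (if x \<in> grp_center G then 1 else 0)"
proof -
  let ?C = "grp_centralizer G"
  let ?Z = "grp_center G"
  have ac: "a \<in> carrier G" using a by auto
  have sumI: "(\<Sum>y\<in>?C x. indK G a y) = real (card (?C x \<inter> (?C a - ?Z)))"
  proof -
    have "(\<Sum>y\<in>?C x. indK G a y) = (\<Sum>y\<in>?C x. if y \<in> ?C a - ?Z then 1 else 0)"
      unfolding indK_def by simp
    also have "\<dots> = (\<Sum>y\<in>?C x \<inter> (?C a - ?Z). 1)"
      using sum.inter_restrict[OF fin_cent[OF grp fin, of x], of "\<lambda>_. (1::real)" "?C a - ?Z"] by simp
    finally show ?thesis by simp
  qed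
  show ?thesis
  proof (cases "x \<in> ?Z")
    case True
    have "indK G a x = 0" unfolding indK_def using True by auto
    moreover have "?C x \<inter> (?C a - ?Z) = ?C a - ?Z" using cent_center[OF grp fin True] cent_sub[OF grp fin] by auto
    ultimately show ?thesis unfolding Lop_def sumI using True by simp
  next
    case False
    show ?thesis
    proof (cases "?C x = ?C a")
      case True
      have xi: "x \<in> ?C a - ?Z" using True False self_in_cent[OF grp fin x] by auto
      hence "indK G a x = 1" unfolding indK_def by simp
      moreover have "?C x \<inter> (?C a - ?Z) = ?C a - ?Z" using True by auto
      moreover have "real (card (?C a)) = real (card ?Z) + real (card (?C a - ?Z))"
        using card_cent_diff[OF grp fin ac] card_cent_ge[OF grp fin ac] by simp
      ultimately show ?thesis unfolding Lop_def sumI using False True by simp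
    next
      case False2: False
      have xn: "x \<notin> ?C a - ?Z"
        using key[OF grp fin con a, of x] False2 by auto
      hence "indK G a x = 0" unfolding indK_def by simp
      moreover have "?C x \<inter> (?C a - ?Z) = {}"
      proof (rule ccontr)
        assume "?C x \<inter> (?C a - ?Z) \<noteq> {}"
        then obtain y where y: "y \<in> ?C x" "y \<in> ?C a - ?Z" by auto
        have "?C y = ?C x" using key[OF grp fin con, of x y] False x y by auto
        moreover have "?C y = ?C a" using key[OF grp fin con a, of y] y by auto
        ultimately show False using False2 by simp
      qed
      ultimately show ?thesis unfolding Lop_def sumI using False by simp
    qed
  qed
qed

lemma z_eig:
  assumes nc: "\<not> comm_group G"
  shows "\<exists>v. (\<forall>x\<in>carrier G. Lop G v x = real (card (grp_center G)) * v x) \<and> (\<exists>x\<in>carrier G. v x \<noteq> 0)"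
proof -
  let ?C = "grp_centralizer G"
  let ?Z = "grp_center G"
  interpret group G by (rule grp)
  obtain a b where ab: "a \<in> carrier G" "b \<in> carrier G" "a \<otimes>\<^bsub>G\<^esub> b \<noteq> b \<otimes>\<^bsub>G\<^esub> a"
    using nc group_comm_groupI by blast
  have aZ: "a \<in> carrier G - ?Z" using ab unfolding grp_center_def by auto
  have bZ: "b \<in> carrier G - ?Z" using ab unfolding grp_center_def by (auto; metis)
  have bnot: "b \<notin> ?C a" using ab unfolding grp_centralizer_def by auto
  have anot: "a \<notin> ?C b" using ab unfolding grp_centralizer_def by auto
  define ma where "ma = real (card (?C a - ?Z))"
  define mb where "mb = real (card (?C b - ?Z))"
  have "b \<in> ?C b - ?Z" using bZ self_in_cent[OF grp fin] by auto
  hence "card (?C b - ?Z) > 0" using fin_cent[OF grp fin, of b] card_gt_0_iff by blast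
  hence mb0: "mb > 0" unfolding mb_def by simp
  define v where "v = (\<lambda>x. mb * indK G a x + (- ma) * indK G b x)"
  have "\<forall>x\<in>carrier G. Lop G v x = real (card ?Z) * v x"
  proof
    fix x assume x: "x \<in> carrier G"
    show "Lop G v x = real (card ?Z) * v x"
      unfolding v_def Lop_lin Lop_ind[OF aZ x] Lop_ind[OF bZ x] ma_def[symmetric] mb_def[symmetric]
      by (simp add: algebra_simps)
  qed
  moreover have "v a \<noteq> 0"
    using anot mb0 self_in_cent[OF grp fin, of a] aZ unfolding v_def indK_def by auto
  ultimately show ?thesis using ab by blast
qed

end

context
  fixes G :: "('a, 'b) monoid_scheme" and f :: "nat \<Rightarrow> 'a"
  assumes grp: "group G" and fin: "finite (carrier G)"
    and bij: "bij_betw f {..<card (carrier G)} (carrier G)"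
begin

lemma lap_carrier: "comm_laplacian G f \<in> carrier_mat (card (carrier G)) (card (carrier G))"
  unfolding comm_laplacian_def by simp

lemma lap_mult:
  assumes u: "u \<in> carrier_vec (card (carrier G))" and i: "i < card (carrier G)"
  shows "(comm_laplacian G f *\<^sub>v u) $ i
    = Lop G (\<lambda>x. u $ the_inv_into {..<card (carrier G)} f x) (f i)"
proof -
  define n where "n = card (carrier G)"
  define g where "g = the_inv_into {..<n} f"
  define w where "w = (\<lambda>x. u $ g x)"
  define x where "x = f i"
  let ?C = "grp_centralizer G x"
  have inj: "inj_on f {..<n}" using bij unfolding bij_betw_def n_def by auto
  have img: "f ` {..<n} = carrier G" using bij unfolding bij_betw_def n_def by auto
  have xc: "x \<in> carrier G" using i img x_def n_def by auto
  have wf: "w (f j) = u $ j" if "j < n" for j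
    unfolding w_def g_def using the_inv_into_f_f[OF inj] that by auto
  have adj: "comm_adj G x y \<longleftrightarrow> y \<in> ?C - {x}" for y
    unfolding comm_adj_def grp_centralizer_def using xc by auto
  have "{y. comm_adj G x y} = ?C - {x}" using adj by auto
  hence d: "card {y. comm_adj G x y} = card (?C - {x})" by simp
  have "(comm_laplacian G f *\<^sub>v u) $ i = (\<Sum>j\<in>{0..<n}. comm_laplacian G f $$ (i, j) * u $ j)"
    using i u unfolding n_def comm_laplacian_def by (simp add: scalar_prod_def)
  also have "\<dots> = (\<Sum>j\<in>{0..<n}. ((if i = j then real (card (?C - {x})) else 0)
      - (if comm_adj G x (f j) then 1 else 0)) * u $ j)"
    using i unfolding comm_laplacian_def n_def x_def d by (intro sum.cong, auto simp: d[unfolded x_def])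
  also have "\<dots> = (\<Sum>j\<in>{0..<n}. (if i = j then real (card (?C - {x})) * u $ j else 0))
      - (\<Sum>j\<in>{0..<n}. (if comm_adj G x (f j) then w (f j) else 0))"
    unfolding left_diff_distrib sum_subtractf
    by (intro arg_cong2[where f="(-)"] sum.cong) (auto simp: wf)
  also have "(\<Sum>j\<in>{0..<n}. (if i = j then real (card (?C - {x})) * u $ j else 0))
      = real (card (?C - {x})) * w x"
    using i wf[of i] x_def n_def by simp
  also have "(\<Sum>j\<in>{0..<n}. (if comm_adj G x (f j) then w (f j) else 0))
      = (\<Sum>y\<in>carrier G. (if comm_adj G x y then w y else 0))"
  proof -
    have "(\<Sum>y\<in>f ` {0..<n}. (if comm_adj G x y then w y else 0)) = (\<Sum>j\<in>{0..<n}. (if comm_adj G x (f j) then w (f j) else 0))"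
      using inj by (subst sum.reindex, auto simp: atLeast0LessThan)
    thus ?thesis using img by (simp add: atLeast0LessThan)
  qed
  also have "\<dots> = (\<Sum>y\<in>carrier G \<inter> (?C - {x}). w y)"
    unfolding adj using sum.inter_restrict[OF fin, of w "?C - {x}"] by simp
  also have "carrier G \<inter> (?C - {x}) = ?C - {x}" using cent_sub[OF grp fin] by auto
  also have "(\<Sum>y\<in>?C - {x}. w y) = (\<Sum>y\<in>?C. w y) - w x"
  proof -
    have s1: "sum w (?C - {x}) = (if x \<in> ?C then sum w ?C - w x else sum w ?C)"
      by (rule sum_diff1[OF fin_cent[OF grp fin]])
    show ?thesis using s1 self_in_cent[OF grp fin xc] by (simp only: if_True)
  qed
  also have "real (card (?C - {x})) = real (card (?C)) - 1"
  proof -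
    have "card ?C \<ge> 1" using self_in_cent[OF grp fin xc] fin_cent[OF grp fin, of x]
      by (metis One_nat_def Suc_leI card_gt_0_iff empty_iff)
    thus ?thesis using self_in_cent[OF grp fin xc] fin_cent[OF grp fin, of x]
      by (simp add: card_Diff_singleton of_nat_diff)
  qed
  also have "(real (card ?C) - 1) * w x - ((\<Sum>y\<in>?C. w y) - w x) = Lop G w x"
    unfolding Lop_def by (simp add: algebra_simps)
  finally show ?thesis unfolding w_def g_def x_def n_def .
qed

end


lemma sum_Q:
  fixes i m :: nat and a :: "nat \<Rightarrow> real"
  assumes "i < Suc m"
  shows "(\<Sum>k\<in>{0..<Suc m}. (if i = k then 1 else if k = 0 then -1 else 0) * a k)
    = (if i = 0 then a 0 else a i - a 0)"
proof -
  have "(\<Sum>k\<in>{0..<Suc m}. (if i = k then 1 else if k = 0 then -1 else 0) * a k)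
     = (if i = 0 then a 0 else - a 0) + (\<Sum>k\<in>{0..<m}. (if i = Suc k then a (Suc k) else 0))"
    unfolding sum.atLeast0_lessThan_Suc_shift by (intro arg_cong2[where f="(+)"] sum.cong) auto
  also have "(\<Sum>k\<in>{0..<m}. (if i = Suc k then a (Suc k) else 0)) = (if i = 0 then 0 else a i)"
  proof (cases i)
    case (Suc i') thus ?thesis using assms by (simp add: sum.delta')
  qed simp
  finally show ?thesis by simp
qed

lemma sum_P:
  fixes j m :: nat and b :: "nat \<Rightarrow> real"
  assumes "j < Suc m"
  shows "(\<Sum>k\<in>{0..<Suc m}. b k * (if j = 0 then 1 else if k = j then 1 else 0))
    = (if j = 0 then (\<Sum>k\<in>{0..<Suc m}. b k) else b j)"
proof (cases "j = 0")
  case False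
  have "(\<Sum>k\<in>{0..<Suc m}. b k * (if j = 0 then 1 else if k = j then 1 else 0))
     = (\<Sum>k\<in>{0..<Suc m}. if k = j then b k else 0)" using False by (intro sum.cong) auto
  thus ?thesis using assms False by (simp add: sum.delta)
qed simp

context
  fixes G :: "('a, 'b) monoid_scheme" and f :: "nat \<Rightarrow> 'a"
  assumes grp: "group G" and fin: "finite (carrier G)" and con: "con_condition G"
    and bij: "bij_betw f {..<card (carrier G)} (carrier G)"
begin

abbreviation "nn \<equiv> card (carrier G)"
abbreviation "LL \<equiv> comm_laplacian G f"
abbreviation "gg \<equiv> the_inv_into {..<card (carrier G)} f"

lemma g_facts: "x \<in> carrier G \<Longrightarrow> gg x < nn \<and> f (gg x) = x"
  using bij the_inv_into_into[of f "{..<nn}" x] f_the_inv_into_f[of f "{..<nn}" x]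
  unfolding bij_betw_def by auto

lemma gf: "i < nn \<Longrightarrow> gg (f i) = i"
  using bij the_inv_into_f_f[of f "{..<nn}" i] unfolding bij_betw_def by auto

lemma f_in: "i < nn \<Longrightarrow> f i \<in> carrier G"
  using bij unfolding bij_betw_def by auto

lemma L_entry: "i < nn \<Longrightarrow> j < nn \<Longrightarrow> LL $$ (i, j) =
  (if i = j then real (card {w. comm_adj G (f i) w}) else 0) - (if comm_adj G (f i) (f j) then 1 else 0)"
  unfolding comm_laplacian_def by simp

lemma mult_entry: "u \<in> carrier_vec nn \<Longrightarrow> i < nn \<Longrightarrow> (LL *\<^sub>v u) $ i = (\<Sum>k\<in>{0..<nn}. LL $$ (i, k) * u $ k)"
  unfolding comm_laplacian_def by (simp add: scalar_prod_def)

lemma row_sum: assumes i: "i < nn" shows "(\<Sum>k\<in>{0..<nn}. LL $$ (i, k)) = 0"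
proof -
  define u where "u = vec nn (\<lambda>_. 1::real)"
  have u: "u \<in> carrier_vec nn" unfolding u_def by simp
  have "(LL *\<^sub>v u) $ i = (\<Sum>k\<in>{0..<nn}. LL $$ (i, k) * u $ k)" by (rule mult_entry[OF u i])
  also have "\<dots> = (\<Sum>k\<in>{0..<nn}. LL $$ (i, k))" by (intro sum.cong) (auto simp: u_def)
  finally have e1: "(LL *\<^sub>v u) $ i = (\<Sum>k\<in>{0..<nn}. LL $$ (i, k))" .
  have "(LL *\<^sub>v u) $ i = Lop G (\<lambda>x. u $ gg x) (f i)" by (rule lap_mult[OF grp fin bij u i])
  also have "Lop G (\<lambda>x. u $ gg x) (f i) = Lop G (\<lambda>_. 1) (f i)"
    by (rule Lop_cong[OF grp fin f_in[OF i]]) (simp add: u_def g_facts)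
  also have "Lop G (\<lambda>_. 1) (f i) = 0" unfolding Lop_def by simp
  finally show ?thesis unfolding e1 .
qed

lemma eig_cases: assumes "eigenvalue LL lam"
  shows "lam = 0 \<or> lam \<ge> real (card (grp_center G))"
proof (rule ccontr)
  assume nc: "\<not> ?thesis"
  have dr: "dim_row LL = nn" using lap_carrier[OF grp fin bij] by auto
  from assms obtain u where "eigenvector LL u lam" unfolding eigenvalue_def by auto
  hence u: "u \<in> carrier_vec nn" "u \<noteq> 0\<^sub>v nn" "LL *\<^sub>v u = lam \<cdot>\<^sub>v u"
    unfolding eigenvector_def dr by auto
  define w where "w = (\<lambda>x. u $ gg x)"
  have ev: "Lop G w x = lam * w x" if x: "x \<in> carrier G" for x
  proof -
    have gx: "gg x < nn" "f (gg x) = x" using g_facts[OF x] by auto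
    have "Lop G w x = (LL *\<^sub>v u) $ gg x" using lap_mult[OF grp fin bij u(1) gx(1)] gx unfolding w_def by simp
    also have "\<dots> = lam * w x" using u(3) gx u(1) unfolding w_def by simp
    finally show ?thesis .
  qed
  have "u = 0\<^sub>v nn"
  proof (rule eq_vecI)
    fix i assume i: "i < dim_vec (0\<^sub>v nn :: real vec)"
    hence i: "i < nn" by simp
    have "w (f i) = 0"
      using eig_small[OF grp fin con ev _ _ f_in[OF i]] nc by auto
    thus "u $ i = 0\<^sub>v nn $ i" using gf[OF i] i unfolding w_def by simp
  qed (use u in simp)
  with u(2) show False by simp
qed

lemma eig_z: assumes nc: "\<not> comm_group G" shows "eigenvalue LL (real (card (grp_center G)))"
proof -
  from z_eig[OF grp fin con nc] obtain v where v: "\<forall>x\<in>carrier G. Lop G v x = real (card (grp_center G)) * v x"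
    and ex: "\<exists>x\<in>carrier G. v x \<noteq> 0" by (elim exE conjE)
  from ex obtain x0 where x0: "x0 \<in> carrier G" "v x0 \<noteq> 0" by (elim bexE)
  define u where "u = vec nn (\<lambda>i. v (f i))"
  have u: "u \<in> carrier_vec nn" unfolding u_def by simp
  have dr: "dim_row LL = nn" using lap_carrier[OF grp fin bij] by auto
  have Lu: "LL *\<^sub>v u = real (card (grp_center G)) \<cdot>\<^sub>v u"
  proof (rule eq_vecI)
    fix i assume "i < dim_vec (real (card (grp_center G)) \<cdot>\<^sub>v u)"
    hence i: "i < nn" using u by simp
    have "(LL *\<^sub>v u) $ i = Lop G (\<lambda>x. u $ gg x) (f i)" by (rule lap_mult[OF grp fin bij u i])
    also have "\<dots> = Lop G v (f i)"
      by (rule Lop_cong[OF grp fin f_in[OF i]]) (simp add: u_def g_facts)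
    also have "\<dots> = real (card (grp_center G)) * v (f i)" using v f_in[OF i] by simp
    also have "v (f i) = u $ i" unfolding u_def using i by simp
    also have "real (card (grp_center G)) * u $ i = (real (card (grp_center G)) \<cdot>\<^sub>v u) $ i"
      using i u by simp
    finally show "(LL *\<^sub>v u) $ i = (real (card (grp_center G)) \<cdot>\<^sub>v u) $ i" .
  qed (use u dr in simp)
  have un: "u \<noteq> 0\<^sub>v nn"
  proof
    assume "u = 0\<^sub>v nn"
    hence "u $ gg x0 = 0" using g_facts[OF x0(1)] by simp
    moreover have "u $ gg x0 = v x0" using g_facts[OF x0(1)] unfolding u_def by simp
    ultimately show False using x0(2) by simp
  qed
  have "eigenvector LL u (real (card (grp_center G)))" unfolding eigenvector_def dr
    using u un Lu by (intro conjI)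
  thus ?thesis unfolding eigenvalue_def by blast
qed

end


context
  fixes G :: "('a, 'b) monoid_scheme" and f :: "nat \<Rightarrow> 'a"
  assumes grp: "group G" and fin: "finite (carrier G)" and con: "con_condition G"
    and bij: "bij_betw f {..<card (carrier G)} (carrier G)"
begin

lemma nn_pos: "card (carrier G) > 0"
proof -
  interpret group G by (rule grp)
  show ?thesis using fin one_closed card_gt_0_iff by blast
qed

lemma order_char_poly_0: "order 0 (char_poly (comm_laplacian G f)) = 1"
proof -
  define n where "n = card (carrier G)"
  define L where "L = comm_laplacian G f"
  obtain m where nm: "n = Suc m" using nn_pos n_def gr0_implies_Suc by blast
  have Lc: "L \<in> carrier_mat n n" unfolding L_def n_def by (rule lap_carrier[OF grp fin bij])
  define PP where "PP = mat n n (\<lambda>(i,j). if j = 0 then 1 else if i = j then 1 else (0::real))"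
  define QQ where "QQ = mat n n (\<lambda>(i,j). if i = j then 1 else if j = 0 then -1 else (0::real))"
  define MM where "MM = mat n n (\<lambda>(i,j). if j = 0 then 0 else if i = 0 then L $$ (0,j) else L $$ (i,j) - L $$ (0,j))"
  have Pc: "PP \<in> carrier_mat n n" and Qc: "QQ \<in> carrier_mat n n" and Mc: "MM \<in> carrier_mat n n"
    unfolding PP_def QQ_def MM_def by auto
  have PQ: "PP * QQ = 1\<^sub>m n"
  proof (rule eq_matI)
    fix i j assume "i < dim_row (1\<^sub>m n :: real mat)" "j < dim_col (1\<^sub>m n :: real mat)"
    hence ij: "i < n" "j < n" by auto
    have "(PP * QQ) $$ (i, j) = (\<Sum>k\<in>{0..<n}. PP $$ (i, k) * QQ $$ (k, j))"
      using ij Pc Qc by (simp add: scalar_prod_def)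
    also have "\<dots> = (\<Sum>k\<in>{0..<Suc m}. (if k = 0 then 1 else if i = k then 1 else 0) * (if k = j then 1 else if j = 0 then -1 else (0::real)))"
      unfolding nm by (rule sum.cong[OF refl]) (use ij nm in \<open>auto simp: PP_def QQ_def\<close>)
    also have "\<dots> = (if i = j then 1 else 0)" by (rule sum_PQ) (use ij nm in auto)
    finally show "(PP * QQ) $$ (i, j) = 1\<^sub>m n $$ (i, j)" using ij by simp
  qed (use Pc Qc in auto)
  have QP: "QQ * PP = 1\<^sub>m n"
  proof (rule eq_matI)
    fix i j assume "i < dim_row (1\<^sub>m n :: real mat)" "j < dim_col (1\<^sub>m n :: real mat)"
    hence ij: "i < n" "j < n" by auto
    have "(QQ * PP) $$ (i, j) = (\<Sum>k\<in>{0..<n}. QQ $$ (i, k) * PP $$ (k, j))"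
      using ij Pc Qc by (simp add: scalar_prod_def)
    also have "\<dots> = (\<Sum>k\<in>{0..<Suc m}. (if i = k then 1 else if k = 0 then -1 else 0) * (if j = 0 then 1 else if k = j then 1 else (0::real)))"
      unfolding nm by (rule sum.cong[OF refl]) (use ij nm in \<open>auto simp: PP_def QQ_def\<close>)
    also have "\<dots> = (if i = j then 1 else 0)" by (rule sum_QP) (use ij nm in auto)
    finally show "(QQ * PP) $$ (i, j) = 1\<^sub>m n $$ (i, j)" using ij by simp
  qed (use Pc Qc in auto)
  define QL where "QL = QQ * L"
  have QLc: "QL \<in> carrier_mat n n" unfolding QL_def using Qc Lc by auto
  have QL: "QL $$ (i, j) = (if i = 0 then L $$ (0, j) else L $$ (i, j) - L $$ (0, j))" if ij: "i < n" "j < n" for i j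
  proof -
    have "QL $$ (i, j) = (\<Sum>k\<in>{0..<n}. QQ $$ (i, k) * L $$ (k, j))"
      unfolding QL_def using ij Qc Lc by (simp add: scalar_prod_def)
    also have "\<dots> = (\<Sum>k\<in>{0..<Suc m}. (if i = k then 1 else if k = 0 then -1 else 0) * L $$ (k, j))"
      unfolding nm by (rule sum.cong[OF refl]) (use ij nm in \<open>auto simp: QQ_def\<close>)
    also have "\<dots> = (if i = 0 then L $$ (0, j) else L $$ (i, j) - L $$ (0, j))"
      by (rule sum_Q) (use ij nm in auto)
    finally show ?thesis .
  qed
  have rs: "(\<Sum>k\<in>{0..<n}. L $$ (i, k)) = 0" if "i < n" for i
    using row_sum[OF grp fin con bij, of i] that unfolding L_def n_def by simp
  have QLP: "QL * PP = MM"
  proof (rule eq_matI)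
    fix i j assume "i < dim_row MM" "j < dim_col MM"
    hence ij: "i < n" "j < n" using Mc by auto
    have "(QL * PP) $$ (i, j) = (\<Sum>k\<in>{0..<n}. QL $$ (i, k) * PP $$ (k, j))"
      using ij Pc QLc by (simp add: scalar_prod_def)
    also have "\<dots> = (\<Sum>k\<in>{0..<Suc m}. QL $$ (i, k) * (if j = 0 then 1 else if k = j then 1 else 0))"
      unfolding nm by (rule sum.cong[OF refl]) (use ij nm in \<open>auto simp: PP_def\<close>)
    also have "\<dots> = (if j = 0 then (\<Sum>k\<in>{0..<Suc m}. QL $$ (i, k)) else QL $$ (i, j))"
      by (rule sum_P) (use ij nm in auto)
    also have "(\<Sum>k\<in>{0..<Suc m}. QL $$ (i, k)) = 0"
    proof -
      have "(\<Sum>k\<in>{0..<Suc m}. QL $$ (i, k)) = (\<Sum>k\<in>{0..<n}. (if i = 0 then L $$ (0, k) else L $$ (i, k) - L $$ (0, k)))"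
        unfolding nm[symmetric] by (rule sum.cong[OF refl]) (use ij QL in auto)
      also have "\<dots> = 0" using rs[of 0] rs[OF ij(1)] nm by (auto simp: sum_subtractf)
      finally show ?thesis .
    qed
    finally show "(QL * PP) $$ (i, j) = MM $$ (i, j)" using ij QL unfolding MM_def by simp
  qed (use Mc Pc QLc in auto)
  have "PP * MM * QQ = (PP * QQ) * L * (PP * QQ)"
    unfolding QLP[symmetric] QL_def using Pc Qc Lc
    by (simp add: assoc_mult_mat[of _ n n _ n _ n])
  also have "\<dots> = L" unfolding PQ using Lc by simp
  finally have LPMQ: "L = PP * MM * QQ" by simp
  have "similar_mat_wit L MM PP QQ"
    unfolding similar_mat_wit_def Let_def using Lc Mc Pc Qc PQ QP LPMQ by auto
  hence sim: "similar_mat L MM" unfolding similar_mat_def by blast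
  define B where "B = mat_delete MM 0 0"
  have cpL: "char_poly L = monom 1 1 * char_poly B"
    unfolding char_poly_similar[OF sim] B_def
    by (rule char_poly_0_column[OF _ Mc]) (use nm in \<open>auto simp: MM_def\<close>)
  have Bc: "B \<in> carrier_mat m m" unfolding B_def using mat_delete_carrier[OF Mc] nm by simp
  have Bent: "B $$ (k, l) = L $$ (Suc k, Suc l) - L $$ (0, Suc l)" if "k < m" "l < m" for k l
    unfolding B_def mat_delete_def using that nm Mc by (simp add: MM_def)
  have B0: "poly (char_poly B) 0 \<noteq> 0"
  proof
    assume "poly (char_poly B) 0 = 0"
    hence "det (- char_matrix B 0) = 0" unfolding char_poly_matrix[OF Bc] .
    moreover have Xc: "- char_matrix B 0 \<in> carrier_mat m m" using Bc by simp
    ultimately obtain v where v: "v \<in> carrier_vec m" "v \<noteq> 0\<^sub>v m" "(- char_matrix B 0) *\<^sub>v v = 0\<^sub>v m"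
      using det_0_iff_vec_prod_zero[OF Xc] by blast
    have Bv: "(\<Sum>l\<in>{0..<m}. B $$ (k, l) * v $ l) = 0" if k: "k < m" for k
    proof -
      have "((- char_matrix B 0) *\<^sub>v v) $ k = 0" using v(3) k by simp
      moreover have "((- char_matrix B 0) *\<^sub>v v) $ k = (\<Sum>l\<in>{0..<m}. (- B $$ (k, l)) * v $ l)"
        using k Bc v(1) by (simp add: scalar_prod_def char_matrix_def sum_negf)
      ultimately have "(\<Sum>l\<in>{0..<m}. (- B $$ (k, l)) * v $ l) = 0" by simp
      thus ?thesis by (simp add: sum_negf)
    qed
    define w where "w = vec n (\<lambda>i. if i = 0 then 0 else v $ (i - 1))"
    have wc: "w \<in> carrier_vec n" unfolding w_def by simp
    have Lw: "(L *\<^sub>v w) $ i = (\<Sum>l\<in>{0..<m}. L $$ (i, Suc l) * v $ l)" if i: "i < n" for i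
    proof -
      have "(L *\<^sub>v w) $ i = (\<Sum>j\<in>{0..<Suc m}. L $$ (i, j) * w $ j)"
        using i Lc wc nm by (simp add: scalar_prod_def)
      also have "\<dots> = (\<Sum>l\<in>{0..<m}. L $$ (i, Suc l) * w $ Suc l)"
        unfolding sum.atLeast0_lessThan_Suc_shift using nm by (simp add: w_def)
      also have "\<dots> = (\<Sum>l\<in>{0..<m}. L $$ (i, Suc l) * v $ l)"
        by (rule sum.cong[OF refl]) (use nm in \<open>auto simp: w_def\<close>)
      finally show ?thesis .
    qed
    define c where "c = (L *\<^sub>v w) $ 0"
    have Lwc: "(L *\<^sub>v w) $ i = c" if i: "i < n" for i
    proof (cases i)
      case 0 thus ?thesis unfolding c_def by simp
    next
      case (Suc k)
      have k: "k < m" using i Suc nm by simp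
      have "(L *\<^sub>v w) $ i - c = (\<Sum>l\<in>{0..<m}. L $$ (Suc k, Suc l) * v $ l) - (\<Sum>l\<in>{0..<m}. L $$ (0, Suc l) * v $ l)"
        unfolding c_def using Lw[OF i] Lw[of 0] nm Suc by simp
      also have "\<dots> = (\<Sum>l\<in>{0..<m}. B $$ (k, l) * v $ l)"
        unfolding sum_subtractf[symmetric] by (rule sum.cong[OF refl]) (use k Bent in \<open>auto simp: left_diff_distrib\<close>)
      also have "\<dots> = 0" by (rule Bv[OF k])
      finally show ?thesis by simp
    qed
    define ww where "ww = (\<lambda>x. w $ the_inv_into {..<n} f x)"
    have Lop_ww: "Lop G ww x = c" if x: "x \<in> carrier G" for x
    proof -
      have gx: "the_inv_into {..<n} f x < n" "f (the_inv_into {..<n} f x) = x"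
        using g_facts[OF grp fin con bij x] unfolding n_def by auto
      have "Lop G ww x = (L *\<^sub>v w) $ (the_inv_into {..<n} f x)"
        using lap_mult[OF grp fin bij, of w "the_inv_into {..<n} f x"] wc gx
        unfolding ww_def L_def n_def by simp
      also have "\<dots> = c" by (rule Lwc[OF gx(1)])
      finally show ?thesis .
    qed
    have "real n * c = 0"
      using sum_Lop[OF grp fin, of ww] Lop_ww unfolding n_def by simp
    hence c0: "c = 0" using nm by simp
    have ww_eq: "ww x = (\<Sum>y\<in>carrier G. ww y) / real n" if "x \<in> carrier G" for x
      using eig_zero[OF grp fin con, of ww x] Lop_ww c0 that unfolding n_def by simp
    have f0: "f 0 \<in> carrier G" using f_in[OF grp fin con bij, of 0] nm n_def by simp
    have "ww (f 0) = 0" unfolding ww_def using gf[OF grp fin con bij, of 0] nm n_def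
      by (simp add: w_def)
    hence s0: "(\<Sum>y\<in>carrier G. ww y) / real n = 0" using ww_eq[OF f0] by simp
    have "v = 0\<^sub>v m"
    proof (rule eq_vecI)
      fix l assume "l < dim_vec (0\<^sub>v m :: real vec)"
      hence l: "l < m" by simp
      have fl: "f (Suc l) \<in> carrier G" using f_in[OF grp fin con bij, of "Suc l"] nm n_def l by simp
      have "ww (f (Suc l)) = 0" using ww_eq[OF fl] s0 by simp
      moreover have "ww (f (Suc l)) = v $ l"
        unfolding ww_def using gf[OF grp fin con bij, of "Suc l"] nm n_def l by (simp add: w_def)
      ultimately show "v $ l = 0\<^sub>v m $ l" using l by simp
    qed (use v in simp)
    with v(2) show False by simp
  qed
  have "char_poly L \<noteq> 0" using degree_monic_char_poly[OF Lc] by auto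
  hence nz: "monom 1 1 * char_poly B \<noteq> 0" unfolding cpL .
  have "order 0 (char_poly L) = order 0 (monom (1::real) 1) + order 0 (char_poly B)"
    unfolding cpL by (rule order_mult[OF nz])
  also have "order 0 (char_poly B) = 0" using B0 by (rule order_0I)
  finally show ?thesis unfolding L_def by simp
qed

end


theorem corollary2p11:
  fixes G :: "('a, 'b) monoid_scheme" and f :: "nat \<Rightarrow> 'a"
  assumes "group G"
    and "finite (carrier G)"
    and "\<not> comm_group G"
    and "con_condition G"
    and "bij_betw f {..<card (carrier G)} (carrier G)"
  shows "algebraic_connectivity (comm_laplacian G f) = real (card (grp_center G))"
proof -
  note grp = assms(1) and fin = assms(2) and nc = assms(3) and con = assms(4) and bij = assms(5)
  define L where "L = comm_laplacian G f"
  define z where "z = real (card (grp_center G))"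
  define p where "p = char_poly L"
  define M where "M = proots p"
  have Lc: "L \<in> carrier_mat (card (carrier G)) (card (carrier G))"
    unfolding L_def by (rule lap_carrier[OF grp fin bij])
  have z1: "z \<ge> 1" unfolding z_def using card_center_pos[OF grp fin] by simp
  have pnz: "p \<noteq> 0" unfolding p_def using degree_monic_char_poly[OF Lc] by auto
  have c0: "count M 0 = 1" unfolding M_def p_def using pnz order_char_poly_0[OF grp fin con bij]
    unfolding p_def L_def by simp
  have root_ev: "eigenvalue L x \<longleftrightarrow> poly p x = 0" for x
    unfolding p_def by (rule eigenvalue_root_char_poly[OF Lc])
  have zM: "z \<in># M"
  proof -
    have "poly p z = 0" using eig_z[OF grp fin con bij nc] root_ev unfolding L_def z_def by simp
    thus ?thesis unfolding M_def using pnz by simp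
  qed
  have elems: "x = 0 \<or> x \<ge> z" if "x \<in># M" for x
  proof -
    have "poly p x = 0" using that pnz unfolding M_def by simp
    hence "eigenvalue L x" using root_ev by simp
    thus ?thesis using eig_cases[OF grp fin con bij] unfolding L_def z_def by blast
  qed
  define M' where "M' = M - {#0#}"
  have MM': "M = add_mset 0 M'" unfolding M'_def using c0
    by (metis count_eq_zero_iff insert_DiffM zero_neq_one)
  have c0': "count M' 0 = 0" unfolding M'_def using c0 by simp
  have zM': "z \<in># M'" using zM z1 MM' by auto
  have elems': "x \<ge> z" if "x \<in># M'" for x
  proof -
    have "x \<in># M" using that MM' by simp
    moreover have "x \<noteq> 0" using that c0' by (metis count_eq_zero_iff)
    ultimately show ?thesis using elems by blast
  qed
  define xs where "xs = sorted_list_of_multiset M'"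
  have sxs: "sorted xs" and setxs: "set xs = set_mset M'" unfolding xs_def by auto
  obtain y ys where xs: "xs = y # ys" using zM' setxs by (cases xs) auto
  have yM: "y \<in># M'" using setxs xs by auto
  have yz: "y \<ge> z" using elems'[OF yM] .
  have "z \<in> set (y # ys)" using zM' setxs xs by simp
  hence "y \<le> z" using sxs xs by auto
  hence yeq: "y = z" using yz by simp
  have "sorted_list_of_multiset M = insort 0 xs" unfolding MM' xs_def by simp
  also have "\<dots> = 0 # y # ys" unfolding xs using yz z1 by simp
  finally have "eigenvalues_sorted L = 0 # y # ys" unfolding eigenvalues_sorted_def M_def p_def .
  thus ?thesis unfolding algebraic_connectivity_def L_def[symmetric] z_def[symmetric] using yeq by simp
qed


end
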